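(* Let $(\mathcal A,\mathcal T,(-))$ be a meta-tangible $\mathcal T$-group module triple. Then every nonzero element $c\in\mathcal A$, of height $m_c$, is uniform, i.e. there is $c_{\mathcal T}\in\mathcal T$ such that one of the following holds: (1) $m_c=1$ and $c=c_{\mathcal T}\in\mathcal T$; (2) $m_c=2$ and $c=c_{\mathcal T}^\circ$; (3) $m_c\ge3$, $c=m_cc_{\mathcal T}$ (the $m_c$-fold sum of $c_{\mathcal T}$), and the triple is exceptional, i.e. $(-)$ is of the first kind and $\mathcal A$ has height greater than $2$, and moreover $\mathbf 3\neq\mathbb 1$.
   Context: $(\mathcal A,+,\mathbb 0)$ commutative monoid, $\mathcal T\subseteq\mathcal A\setminus\{\mathbb 0\}$. A negation map is $(-):\mathcal A\to\mathcal A$ with $(-)(b_1+b_2)=(-)b_1+(-)b_2$, $(-)((-)b)=b$, $(-)\mathbb 0=\mathbb 0$, $(-)\mathcal T\subseteq\mathcal T$. Write $b(-)c:=b+((-)c)$, $b^\circ:=b(-)b$, $\mathcal A^\circ=\{b^\circ:b\in\mathcal A\}$. A $\mathcal T$-triple $(\mathcal A,\mathcal T,(-))$: such data with an action $\mathcal T\times\mathcal A\to\mathcal A$ satisfying $a(b_1+b_2)=ab_1+ab_2$, $a\mathbb 0=\mathbb 0$, $(-)(ab)=((-)a)b=a((-)b)$, with $\mathcal T\cap\mathcal A^\circ=\emptyset$ and every element of $\mathcal A$ a finite sum of elements of $\mathcal T$. It is a $\mathcal T$-group module triple if moreover $\mathcal T$ is a group with identity $\mathbb 1$ whose multiplication is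 the restriction of the action, $\mathbb 1b=b$ and $(a_1a_2)b=a_1(a_2b)$. Meta-tangible: $a+b\in\mathcal T$ for all $a,b\in\mathcal T$ with $b\neq(-)a$. $(-)$ is of the first kind if $(-)a=a$ for all $a\in\mathcal T$. $\mathbf 3=\mathbb 1+\mathbb 1+\mathbb 1$. Height of $c$: least $t$ with $c=\sum_{i=1}^ta_i$, $a_i\in\mathcal T$; height of $\mathcal A$: supremum over its elements. *)

theory Defs
  imports Main
begin

text \<open>The monoid (A,+,0) is the whole type 'a (class comm_monoid_add).
  T is a subset, neg the negation map, act the action T x A -> A
  (given as a total function, constrained only for first argument in T),
  one the identity of the group T.\<close>

definition negation_map :: "'a::comm_monoid_add set \<Rightarrow> ('a \<Rightarrow> 'a) \<Rightarrow> bool" where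
  "negation_map T neg \<longleftrightarrow>
     (\<forall>b1 b2. neg (b1 + b2) = neg b1 + neg b2) \<and>
     (\<forall>b. neg (neg b) = b) \<and> neg 0 = 0 \<and> neg ` T \<subseteq> T"

definition circ :: "('a::comm_monoid_add \<Rightarrow> 'a) \<Rightarrow> 'a \<Rightarrow> 'a" where
  "circ neg b = b + neg b"

definition T_triple :: "'a::comm_monoid_add set \<Rightarrow> ('a \<Rightarrow> 'a) \<Rightarrow> ('a \<Rightarrow> 'a \<Rightarrow> 'a) \<Rightarrow> bool" where
  "T_triple T neg act \<longleftrightarrow>
     T \<subseteq> UNIV - {0} \<and> negation_map T neg \<and>
     (\<forall>a\<in>T. \<forall>b1 b2. act a (b1 + b2) = act a b1 + act a b2) \<and>
     (\<forall>a\<in>T. act a 0 = 0) \<and>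
     (\<forall>a\<in>T. \<forall>b. neg (act a b) = act (neg a) b \<and> act (neg a) b = act a (neg b)) \<and>
     T \<inter> range (circ neg) = {} \<and>
     (\<forall>c. \<exists>xs. set xs \<subseteq> T \<and> c = sum_list xs)"

definition T_group_module_triple ::
  "'a::comm_monoid_add set \<Rightarrow> ('a \<Rightarrow> 'a) \<Rightarrow> ('a \<Rightarrow> 'a \<Rightarrow> 'a) \<Rightarrow> 'a \<Rightarrow> bool" where
  "T_group_module_triple T neg act one \<longleftrightarrow>
     T_triple T neg act \<and>
     one \<in> T \<and>
     (\<forall>a1\<in>T. \<forall>a2\<in>T. act a1 a2 \<in> T) \<and>
     (\<forall>a\<in>T. act one a = a \<and> act a one = a) \<and>
     (\<forall>a\<in>T. \<exists>a'\<in>T. act a a' = one \<and> act a' a = one) \<and>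
     (\<forall>b. act one b = b) \<and>
     (\<forall>a1\<in>T. \<forall>a2\<in>T. \<forall>b. act (act a1 a2) b = act a1 (act a2 b))"

definition meta_tangible :: "'a::comm_monoid_add set \<Rightarrow> ('a \<Rightarrow> 'a) \<Rightarrow> bool" where
  "meta_tangible T neg \<longleftrightarrow> (\<forall>a\<in>T. \<forall>b\<in>T. b \<noteq> neg a \<longrightarrow> a + b \<in> T)"

definition first_kind :: "'a set \<Rightarrow> ('a \<Rightarrow> 'a) \<Rightarrow> bool" where
  "first_kind T neg \<longleftrightarrow> (\<forall>a\<in>T. neg a = a)"

definition height :: "'a::comm_monoid_add set \<Rightarrow> 'a \<Rightarrow> nat" where
  "height T c = (LEAST t. \<exists>xs. length xs = t \<and> set xs \<subseteq> T \<and> sum_list xs = c)"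

text \<open>Height of A (supremum of the heights of its elements) is greater than 2
  iff some element has height greater than 2.\<close>
definition height_gt_2 :: "'a::comm_monoid_add set \<Rightarrow> bool" where
  "height_gt_2 T \<longleftrightarrow> (\<exists>c. height T c > 2)"

definition nsum :: "nat \<Rightarrow> 'a::comm_monoid_add \<Rightarrow> 'a" where
  "nsum m a = sum_list (replicate m a)"

end

theory Submission
  imports Defs "HOL-Library.Multiset"
begin

theorem theorem7p28:
  fixes T :: "'a::comm_monoid_add set" and neg :: "'a \<Rightarrow> 'a"
    and act :: "'a \<Rightarrow> 'a \<Rightarrow> 'a" and one :: 'a and c :: 'a
  assumes "T_group_module_triple T neg act one"
    and "meta_tangible T neg"
    and "c \<noteq> 0"
  shows "\<exists>cT\<in>T.
     (height T c = 1 \<and> c = cT) \<or>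
     (height T c = 2 \<and> c = circ neg cT) \<or>
     (height T c \<ge> 3 \<and> c = nsum (height T c) cT \<and>
        first_kind T neg \<and> height_gt_2 T \<and> one + one + one \<noteq> one)"
proof -
  have GM: "T_group_module_triple T neg act one" by fact
  have TT: "T_triple T neg act" using GM unfolding T_group_module_triple_def by blast
  have MT: "\<forall>a\<in>T. \<forall>b\<in>T. b \<noteq> neg a \<longrightarrow> a + b \<in> T"
    using assms(2) unfolding meta_tangible_def by blast
  define m where "m = height T c"
  have ex: "\<exists>t xs. length xs = t \<and> set xs \<subseteq> T \<and> sum_list xs = c"
    using TT unfolding T_triple_def by metis
  obtain xs where xs: "length xs = m" "set xs \<subseteq> T" "sum_list xs = c"
    using LeastI_ex[OF ex] unfolding m_def height_def by blast
  have minl: "m \<le> length ys" if "set ys \<subseteq> T" "sum_list ys = c" for ys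
    unfolding m_def height_def by (rule Least_le) (use that in blast)
  have minM: "m \<le> size N" if "set_mset N \<subseteq> T" "sum_mset N = c" for N
  proof -
    obtain ys where "mset ys = N" using ex_mset by blast
    then show ?thesis using minl[of ys] that by (metis set_mset_mset size_mset sum_mset_sum_list)
  qed
  define M where "M = mset xs"
  have M: "size M = m" "set_mset M \<subseteq> T" "sum_mset M = c"
    using xs unfolding M_def by (auto simp: sum_mset_sum_list)
  have m0: "m \<noteq> 0" using M assms(3) by (metis size_eq_0_iff_empty sum_mset.empty)
  have pair: "b = neg a" if a: "a \<in># M" and b: "b \<in># M - {#a#}" for a b
  proof (rule ccontr)
    assume nb: "b \<noteq> neg a"
    have aT: "a \<in> T" using a M by auto
    have "b \<in># M" using b by (meson in_diffD)
    then have bT: "b \<in> T" using M by auto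
    have ab: "a + b \<in> T" using MT aT bT nb by blast
    have e1: "M - {#a#} = add_mset b (M - {#a#} - {#b#})" using b by (rule insert_DiffM[symmetric])
    have e2: "M = add_mset a (M - {#a#})" using a by (rule insert_DiffM[symmetric])
    define R where "R = M - {#a#} - {#b#}"
    have Meq: "M = add_mset a (add_mset b R)" using e1 e2 unfolding R_def by simp
    define N where "N = add_mset (a+b) R"
    have "set_mset R \<subseteq> T" using M(2) unfolding R_def using in_diffD by fastforce
    then have "set_mset N \<subseteq> T" using ab unfolding N_def by simp
    moreover have "sum_mset N = c" using M(3) Meq unfolding N_def by (simp add: add.assoc)
    moreover have "size N < size M" unfolding N_def Meq by simp
    ultimately show False using minM[of N] M(1) by linarith
  qed
  show ?thesis
  proof (cases "m = 1")
    case True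
    then obtain x where "xs = [x]" using xs(1) by (metis One_nat_def length_0_conv length_Suc_conv)
    then show ?thesis using xs True m_def by auto
  next
    case m1: False
    show ?thesis
    proof (cases "m = 2")
      case True
      then obtain a b where ab: "xs = [a, b]" using xs(1)
        by (metis One_nat_def Suc_1 length_0_conv length_Suc_conv)
      have "b = neg a" using pair[of a b] unfolding M_def ab by simp
      then show ?thesis using xs True m_def ab by (auto simp: circ_def)
    next
      case False
      with m1 m0 have m3: "m \<ge> 3" by auto
      have "M \<noteq> {#}" using M(1) m0 by auto
      then obtain a where a: "a \<in># M" by (meson multiset_nonemptyE)
      define M1 where "M1 = M - {#a#}"
      have sM1: "size M1 = m - 1" using a M(1) unfolding M1_def by (simp add: size_Diff_submset)
      have "M1 \<noteq> {#}" using sM1 m3 by auto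
      then obtain b where b: "b \<in># M1" by (meson multiset_nonemptyE)
      define M2 where "M2 = M1 - {#b#}"
      have sM2: "size M2 = m - 2" using b sM1 unfolding M2_def by (simp add: size_Diff_submset)
      have "M2 \<noteq> {#}" using sM2 m3 by auto
      then obtain d where d: "d \<in># M2" by (meson multiset_nonemptyE)
      have ba: "b = neg a" using pair a b unfolding M1_def by blast
      have dM1: "d \<in># M1" using d unfolding M2_def by (meson in_diffD)
      have da: "d = neg a" using pair a dM1 unfolding M1_def by blast
      have bM: "b \<in># M" using b unfolding M1_def by (meson in_diffD)
      have "d \<in># M - {#b#}"
      proof -
        have f1: "M = add_mset a M1" using a unfolding M1_def by (rule insert_DiffM[symmetric])
        have f2: "M1 = add_mset b M2" using b unfolding M2_def by (rule insert_DiffM[symmetric])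
        have "M - {#b#} = add_mset a M2" unfolding f1 f2 by simp
        then show ?thesis using d by simp
      qed
      then have db: "d = neg b" using pair bM by blast
      have negN: "\<forall>x. neg (neg x) = x" using TT unfolding T_triple_def negation_map_def by blast
      have bb: "b = neg b" using ba da db by simp
      have aa: "a = b" using ba bb negN by metis
      have na: "neg a = a" using aa bb by simp
      have allM: "x = a" if "x \<in># M" for x
      proof (cases "x = a")
        case False
        then have "x \<in># M1" using that unfolding M1_def by (simp add: in_diff_count)
        then show ?thesis using pair a na unfolding M1_def by blast
      qed simp
      have xsr: "xs = replicate m a"
        using allM xs(1) unfolding M_def by (metis replicate_length_same set_mset_mset)
      have cr: "c = nsum m a" using xs(3) xsr unfolding nsum_def by simp
      have aT: "a \<in> T" using a M by auto
      have G: "\<forall>a\<in>T. \<exists>a'\<in>T. act a a' = one \<and> act a' a = one"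
        "\<forall>a1\<in>T. \<forall>a2\<in>T. act a1 a2 \<in> T"
        "\<forall>a\<in>T. act one a = a \<and> act a one = a"
        "\<forall>a1\<in>T. \<forall>a2\<in>T. \<forall>b. act (act a1 a2) b = act a1 (act a2 b)"
        using GM unfolding T_group_module_triple_def by blast+
      have A: "\<forall>a\<in>T. \<forall>b. neg (act a b) = act (neg a) b \<and> act (neg a) b = act a (neg b)"
        "\<forall>a\<in>T. \<forall>b1 b2. act a (b1 + b2) = act a b1 + act a b2"
        using TT unfolding T_triple_def by blast+
      have fk: "first_kind T neg"
        unfolding first_kind_def
      proof
        fix t assume tT: "t \<in> T"
        obtain a' where a': "a' \<in> T" "act a a' = one" "act a' a = one" using G(1) aT by blast
        define x where "x = act t a'"
        have xT: "x \<in> T" using G(2) tT a' unfolding x_def by blast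
        have xa: "act x a = t" using G(4) G(3) tT a' aT unfolding x_def by simp
        have "neg t = act x (neg a)" using A(1) xT xa by metis
        then show "neg t = t" using na xa by simp
      qed
      have three: "one + one + one \<noteq> one"
      proof
        assume h: "one + one + one = one"
        have "act a (one + one + one) = a + a + a" using A(2) G(3) aT by simp
        then have aaa: "a + a + a = a" using h G(3) aT by simp
        have "nsum m a = nsum (m - 2) a"
        proof -
          obtain k where k: "m = k + 3" using m3 by (metis add.commute le_Suc_ex)
          have "nsum m a = nsum k a + (a + a + a)" unfolding nsum_def k
            by (simp add: replicate_add numeral_3_eq_3 add_ac)
          also have "\<dots> = nsum (k + 1) a" unfolding nsum_def aaa by (simp add: replicate_add add.commute)
          finally show ?thesis using k by simp
        qed
        then have "m \<le> length (replicate (m - 2) a)"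
          using minl[of "replicate (m-2) a"] cr aT unfolding nsum_def by (auto simp: set_replicate_conv_if)
        then show False using m3 by simp
      qed
      have hg: "height_gt_2 T" unfolding height_gt_2_def using m3 m_def by (intro exI[of _ c]) simp
      show ?thesis using aT cr fk three hg m3 m_def by auto
    qed
  qed
qed

end
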